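(* (a) Let $\Phi=B_n$ and let $D\subset\Phi^+$ be an orthogonal subset with $\varepsilon_1\in D$ and containing no root $\varepsilon_k$ with $k\ge2$ (so $D\cap\mathcal C_1=\{\varepsilon_1\}$). Let $\tilde\Phi^+=\{\varepsilon_a\pm\varepsilon_b:2\le a<b\le n\}$ (i.e. $\Phi^+\setminus(\mathcal C_1\cup\mathcal R_0)$, a positive system of type $D_{n-1}$), $\tilde D=D\cap\tilde\Phi^+=D\setminus\{\varepsilon_1\}$, $\tilde\sigma=\prod_{\beta\in\tilde D}r_\beta$, and $l'(\tilde\sigma)=\#\{\alpha\in\tilde\Phi^+:\tilde\sigma(\alpha)\notin\tilde\Phi^+\}$. Then $$l(\sigma)=l'(\tilde\sigma)+|\mathcal C_1|+2\cdot\#\{\beta\in\tilde D:\mathrm{row}(\beta)<0\},$$ where $|\mathcal C_1|=2n-1$ and $\mathrm{row}(\beta)<0$ means $\beta=\varepsilon_a+\varepsilon_b$ for some $a<b$. (b) Let $\Phi=C_n$ and let $D\subset\Phi^+$ be an orthogonal subset with $D\cap\mathcal C_1=\{2\varepsilon_1\}$. Let $\tilde\Phi^+=\Phi^+\setminus\mathcal C_1$ (a positive system of type $C_{n-1}$ in the coordinates $\varepsilon_2,\dots,\varepsilon_n$), $\tilde D=D\cap\tilde\Phi^+$, $\tilde\sigma=\prod_{\beta\in\tilde D}r_\beta$ and $l'(\tilde\sigma)=\#\{\alpha\in\tilde\Phi^+:\tilde\sigma(\alpha)\notin\tilde\Phi^+\}$. Then $l(\sigma)=l'(\tilde\sigma)+|\mathcal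 C_1|$, where $|\mathcal C_1|=2n-1$.
   Context: Let $\Phi$ be a root system of type $B_n$, $C_n$ or $D_n$ in $\mathbb R^n$ with standard basis $\varepsilon_1,\dots,\varepsilon_n$ and positive roots $\Phi^+=\{\varepsilon_i\pm\varepsilon_j:1\le i<j\le n\}\cup\Phi_1^+$, where $\Phi_1^+=\emptyset$ for $D_n$, $\{\varepsilon_i\}$ for $B_n$, $\{2\varepsilon_i\}$ for $C_n$. $D\subset\Phi^+$ is orthogonal if its roots are pairwise orthogonal. $r_\beta$ denotes the reflection in the hyperplane orthogonal to $\beta$, $\sigma=\prod_{\beta\in D}r_\beta$, and $l(\sigma)=\#\{\alpha\in\Phi^+:\sigma(\alpha)\in-\Phi^+\}$ (the length of $\sigma$ in the Weyl group). $\mathrm{col}(\varepsilon_i\pm\varepsilon_j)=\mathrm{col}(\varepsilon_i)=\mathrm{col}(2\varepsilon_i)=i$; $\mathrm{row}(\varepsilon_i\pm\varepsilon_j)=\mp j$, $\mathrm{row}(\varepsilon_i)=0$, $\mathrm{row}(2\varepsilon_i)=-i$; $\mathcal R_i=\{\alpha\in\Phi^+:\mathrm{row}(\alpha)=i\}$, $\mathcal C_j=\{\alpha\in\Phi^+:\mathrm{col}(\alpha)=j\}$. *)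

theory Defs
  imports Complex_Main
begin

text \<open>Vectors of R^n are modelled as functions nat => real, supported on {1..n}.\<close>

type_synonym vec = "nat \<Rightarrow> real"

definition eps :: "nat \<Rightarrow> vec" where
  "eps i = (\<lambda>k. if k = i then 1 else 0)"

definition vadd :: "vec \<Rightarrow> vec \<Rightarrow> vec" where
  "vadd u v = (\<lambda>k. u k + v k)"

definition vsub :: "vec \<Rightarrow> vec \<Rightarrow> vec" where
  "vsub u v = (\<lambda>k. u k - v k)"

definition vscale :: "real \<Rightarrow> vec \<Rightarrow> vec" where
  "vscale c v = (\<lambda>k. c * v k)"

definition vneg :: "vec \<Rightarrow> vec" where
  "vneg v = (\<lambda>k. - v k)"

definition ip :: "nat \<Rightarrow> vec \<Rightarrow> vec \<Rightarrow> real" where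
  "ip n u v = (\<Sum>k=1..n. u k * v k)"

definition long_pos :: "nat \<Rightarrow> vec set" where
  "long_pos n = {vadd (eps i) (eps j) | i j. 1 \<le> i \<and> i < j \<and> j \<le> n}
              \<union> {vsub (eps i) (eps j) | i j. 1 \<le> i \<and> i < j \<and> j \<le> n}"

definition posB :: "nat \<Rightarrow> vec set" where
  "posB n = long_pos n \<union> {eps i | i. 1 \<le> i \<and> i \<le> n}"

definition posC :: "nat \<Rightarrow> vec set" where
  "posC n = long_pos n \<union> {vscale 2 (eps i) | i. 1 \<le> i \<and> i \<le> n}"

definition orthogonal_set :: "nat \<Rightarrow> vec set \<Rightarrow> bool" where
  "orthogonal_set n D \<longleftrightarrow> (\<forall>\<alpha>\<in>D. \<forall>\<beta>\<in>D. \<alpha> \<noteq> \<beta> \<longrightarrow> ip n \<alpha> \<beta> = 0)"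

definition refl :: "nat \<Rightarrow> vec \<Rightarrow> vec \<Rightarrow> vec" where
  "refl n \<beta> v = vsub v (vscale (2 * ip n v \<beta> / ip n \<beta> \<beta>) \<beta>)"

text \<open>Product of the reflections r_beta, beta in D (they commute for orthogonal D).\<close>
definition sigma :: "nat \<Rightarrow> vec set \<Rightarrow> vec \<Rightarrow> vec" where
  "sigma n D = Finite_Set.fold (\<lambda>\<beta> f. refl n \<beta> \<circ> f) id D"

definition len :: "vec set \<Rightarrow> (vec \<Rightarrow> vec) \<Rightarrow> nat" where
  "len P s = card {\<alpha> \<in> P. vneg (s \<alpha>) \<in> P}"

definition len' :: "vec set \<Rightarrow> (vec \<Rightarrow> vec) \<Rightarrow> nat" where
  "len' P s = card {\<alpha> \<in> P. s \<alpha> \<notin> P}"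

definition col :: "vec \<Rightarrow> nat" where
  "col \<alpha> = (LEAST k. \<alpha> k \<noteq> 0)"

text \<open>row(eps_i +- eps_j) = -+ j, row(eps_i) = 0, row(2 eps_i) = -i.\<close>
definition row :: "vec \<Rightarrow> real" where
  "row \<alpha> = (if \<exists>j. col \<alpha> < j \<and> \<alpha> j \<noteq> 0
             then (let j = (THE j. col \<alpha> < j \<and> \<alpha> j \<noteq> 0) in - \<alpha> j * real j)
             else if \<alpha> (col \<alpha>) = 2 then - real (col \<alpha>) else 0)"

definition colset :: "vec set \<Rightarrow> nat \<Rightarrow> vec set" where
  "colset P j = {\<alpha> \<in> P. col \<alpha> = j}"

definition rowset :: "vec set \<Rightarrow> real \<Rightarrow> vec set" where
  "rowset P i = {\<alpha> \<in> P. row \<alpha> = i}"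

end

theory Submission
  imports Defs
begin

lemma ip_eps: "1 \<le> a \<Longrightarrow> a \<le> n \<Longrightarrow> ip n v (eps a) = v a"
  by (simp add: ip_def eps_def if_distrib cong: if_cong)

lemma ip_sym: "ip n u v = ip n v u"
  by (simp add: ip_def mult.commute)

lemma ip_eps_l: "1 \<le> a \<Longrightarrow> a \<le> n \<Longrightarrow> ip n (eps a) v = v a"
  using ip_eps ip_sym by metis

lemma ip_vadd: "ip n (vadd u w) v = ip n u v + ip n w v"
  by (simp add: ip_def vadd_def algebra_simps sum.distrib)
lemma ip_vsub: "ip n (vsub u w) v = ip n u v - ip n w v"
  by (simp add: ip_def vsub_def algebra_simps sum_subtractf)
lemma ip_vscale: "ip n (vscale c u) v = c * ip n u v"
  by (simp add: ip_def vscale_def algebra_simps sum_distrib_left)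

definition swp :: "nat \<Rightarrow> nat \<Rightarrow> vec \<Rightarrow> vec" where
  "swp a b v = (\<lambda>k. v (if k = a then b else if k = b then a else k))"
definition ng :: "nat \<Rightarrow> vec \<Rightarrow> vec" where
  "ng a v = (\<lambda>k. if k = a then - v k else v k)"

lemma ip_v_vsub: "1 \<le> a \<Longrightarrow> a \<le> n \<Longrightarrow> 1 \<le> b \<Longrightarrow> b \<le> n \<Longrightarrow> ip n v (vsub (eps a) (eps b)) = v a - v b"
  by (subst ip_sym) (simp add: ip_vsub ip_eps_l)
lemma ip_v_vadd: "1 \<le> a \<Longrightarrow> a \<le> n \<Longrightarrow> 1 \<le> b \<Longrightarrow> b \<le> n \<Longrightarrow> ip n v (vadd (eps a) (eps b)) = v a + v b"
  by (subst ip_sym) (simp add: ip_vadd ip_eps_l)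
lemma ip_v_vscale: "1 \<le> a \<Longrightarrow> a \<le> n \<Longrightarrow> ip n v (vscale c (eps a)) = c * v a"
  by (subst ip_sym) (simp add: ip_vscale ip_eps_l)

lemma refl_minus: "a \<noteq> b \<Longrightarrow> 1 \<le> a \<Longrightarrow> a \<le> n \<Longrightarrow> 1 \<le> b \<Longrightarrow> b \<le> n \<Longrightarrow>
   refl n (vsub (eps a) (eps b)) = swp a b"
  apply (rule ext)+
  apply (simp add: refl_def ip_v_vsub)
  apply (simp add: swp_def vsub_def vscale_def eps_def field_simps)
  done
lemma refl_plus: "a \<noteq> b \<Longrightarrow> 1 \<le> a \<Longrightarrow> a \<le> n \<Longrightarrow> 1 \<le> b \<Longrightarrow> b \<le> n \<Longrightarrow>
   refl n (vadd (eps a) (eps b)) = ng a \<circ> ng b \<circ> swp a b"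
  apply (rule ext)+
  apply (simp add: refl_def ip_v_vadd)
  apply (simp add: swp_def ng_def vsub_def vadd_def vscale_def eps_def field_simps)
  done
lemma refl_short: "1 \<le> a \<Longrightarrow> a \<le> n \<Longrightarrow> refl n (eps a) = ng a"
  apply (rule ext)+
  apply (simp add: refl_def ip_eps)
  apply (simp add: ng_def vsub_def vscale_def eps_def field_simps)
  done
lemma refl_short2: "1 \<le> a \<Longrightarrow> a \<le> n \<Longrightarrow> refl n (vscale 2 (eps a)) = ng a"
  apply (rule ext)+
  apply (simp add: refl_def ip_v_vscale)
  apply (simp add: ng_def vsub_def vscale_def eps_def field_simps)
  done
definition ON :: "nat \<Rightarrow> vec set \<Rightarrow> bool" where
  "ON n D \<longleftrightarrow> (\<forall>\<beta>\<in>D. ip n \<beta> \<beta> \<noteq> 0) \<and> orthogonal_set n D"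

lemma ip_refl: "ip n \<beta> \<gamma> = 0 \<Longrightarrow> ip n (refl n \<gamma> v) \<beta> = ip n v \<beta>"
  by (simp add: refl_def ip_vsub ip_vscale ip_sym[of n \<gamma> \<beta>])

lemma refl_comm: "ip n \<beta> \<gamma> = 0 \<Longrightarrow> refl n \<beta> \<circ> refl n \<gamma> = refl n \<gamma> \<circ> refl n \<beta>"
proof (rule ext)
  fix v
  assume h: "ip n \<beta> \<gamma> = 0"
  have h2: "ip n \<gamma> \<beta> = 0" using h ip_sym by metis
  have e1: "refl n \<beta> (refl n \<gamma> v) = vsub (refl n \<gamma> v) (vscale (2 * ip n v \<beta> / ip n \<beta> \<beta>) \<beta>)"
    using refl_def[of n \<beta> "refl n \<gamma> v"] ip_refl[OF h] by simp
  have e2: "refl n \<gamma> (refl n \<beta> v) = vsub (refl n \<beta> v) (vscale (2 * ip n v \<gamma> / ip n \<gamma> \<gamma>) \<gamma>)"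
    using refl_def[of n \<gamma> "refl n \<beta> v"] ip_refl[OF h2] by simp
  show "(refl n \<beta> \<circ> refl n \<gamma>) v = (refl n \<gamma> \<circ> refl n \<beta>) v"
    unfolding comp_def e1 e2
    by (simp add: refl_def vsub_def vscale_def fun_eq_iff algebra_simps)
qed

lemma sigma_empty: "sigma n {} = id"
  by (simp add: sigma_def)

lemma sigma_insert:
  assumes "ON n D" "finite A" "insert x A \<subseteq> D" "x \<notin> A"
  shows "sigma n (insert x A) = refl n x \<circ> sigma n A"
proof -
  interpret comp_fun_commute_on D "\<lambda>\<beta> f. refl n \<beta> \<circ> f"
  proof
    fix x y assume "x \<in> D" "y \<in> D"
    show "(\<lambda>f. refl n y \<circ> f) \<circ> (\<lambda>f. refl n x \<circ> f) = (\<lambda>f. refl n x \<circ> f) \<circ> (\<lambda>f. refl n y \<circ> f)"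
    proof (cases "x = y")
      case False
      then have "ip n y x = 0" using assms(1) \<open>x \<in> D\<close> \<open>y \<in> D\<close> by (auto simp: ON_def orthogonal_set_def)
      then show ?thesis using refl_comm[of n y x] by (auto simp: fun_eq_iff)
    qed simp
  qed
  show ?thesis unfolding sigma_def using assms by (simp add: fold_insert)
qed

lemma ip_lin_sum: "ip n (\<lambda>k. v k - (\<Sum>\<beta>\<in>F. g \<beta> * \<beta> k)) x = ip n v x - (\<Sum>\<beta>\<in>F. g \<beta> * ip n \<beta> x)"
  unfolding ip_def
  by (simp add: algebra_simps sum_subtractf sum_distrib_left sum_distrib_right sum.swap[of _ F])

lemma sigma_cf:
  assumes "ON n D" "finite A" "A \<subseteq> D"
  shows "sigma n A v = (\<lambda>k. v k - (\<Sum>\<beta>\<in>A. (2 * ip n v \<beta> / ip n \<beta> \<beta>) * \<beta> k))"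
  using assms(2,3)
proof (induction A rule: finite_induct)
  case empty
  then show ?case by (simp add: sigma_empty)
next
  case (insert x F)
  have orth: "\<forall>\<beta>\<in>F. ip n \<beta> x = 0"
    using insert assms(1) by (auto simp: ON_def orthogonal_set_def)
  have IH: "sigma n F v = (\<lambda>k. v k - (\<Sum>\<beta>\<in>F. (2 * ip n v \<beta> / ip n \<beta> \<beta>) * \<beta> k))"
    using insert by auto
  have ipx: "ip n (sigma n F v) x = ip n v x"
    unfolding IH ip_lin_sum using orth by simp
  have "sigma n (insert x F) v = refl n x (sigma n F v)"
    using sigma_insert[OF assms(1) insert(1) insert(4) insert(2)] by simp
  also have "\<dots> = (\<lambda>k. v k - (\<Sum>\<beta>\<in>insert x F. (2 * ip n v \<beta> / ip n \<beta> \<beta>) * \<beta> k))"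
    apply (subst refl_def) unfolding ipx
    apply (subst IH)
    using insert(1,2) by (simp add: vsub_def vscale_def fun_eq_iff algebra_simps)
  finally show ?case .
qed
definition LR :: "nat \<Rightarrow> vec set" where
  "LR n = {vadd (vscale c (eps i)) (vscale d (eps j)) | c d i j. (c = 1 \<or> c = -1) \<and> (d = 1 \<or> d = -1)
     \<and> i \<noteq> j \<and> 1 \<le> i \<and> i \<le> n \<and> 1 \<le> j \<and> j \<le> n}"
definition SR :: "nat \<Rightarrow> real \<Rightarrow> vec set" where
  "SR n t = {vscale (t * c) (eps i) | c i. (c = 1 \<or> c = -1) \<and> 1 \<le> i \<and> i \<le> n}"

definition clos :: "nat \<Rightarrow> vec set \<Rightarrow> bool" where
  "clos n X \<longleftrightarrow> (\<forall>a b x. 1 \<le> a \<longrightarrow> a \<le> n \<longrightarrow> 1 \<le> b \<longrightarrow> b \<le> n \<longrightarrow> x \<in> X \<longrightarrow> swp a b x \<in> X \<and> ng a x \<in> X)"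

definition sw :: "nat \<Rightarrow> nat \<Rightarrow> nat \<Rightarrow> nat" where
  "sw a b i = (if i = a then b else if i = b then a else i)"

lemma swp_vadd: "swp a b (vadd u w) = vadd (swp a b u) (swp a b w)"
  by (simp add: swp_def vadd_def)
lemma ng_vadd: "ng a (vadd u w) = vadd (ng a u) (ng a w)"
  by (auto simp: ng_def vadd_def)
lemma swp_se: "swp a b (vscale c (eps i)) = vscale c (eps (sw a b i))"
  by (auto simp: swp_def vscale_def eps_def sw_def fun_eq_iff)
lemma ng_se: "ng a (vscale c (eps i)) = vscale (if i = a then - c else c) (eps i)"
  by (auto simp: ng_def vscale_def eps_def fun_eq_iff)
lemma sw_range: "1 \<le> a \<Longrightarrow> a \<le> n \<Longrightarrow> 1 \<le> b \<Longrightarrow> b \<le> n \<Longrightarrow> 1 \<le> i \<Longrightarrow> i \<le> n \<Longrightarrow> 1 \<le> sw a b i \<and> sw a b i \<le> n"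
  by (simp add: sw_def)
lemma sw_inj: "i \<noteq> j \<Longrightarrow> sw a b i \<noteq> sw a b j"
  by (simp add: sw_def)

lemma clos_LR: "clos n (LR n)"
  unfolding clos_def
proof (intro allI impI)
  fix a b x
  assume ab: "1 \<le> a" "a \<le> n" "1 \<le> b" "b \<le> n" and "x \<in> LR n"
  then obtain c d i j where x: "x = vadd (vscale c (eps i)) (vscale d (eps j))"
    and cd: "(c = 1 \<or> c = -1)" "(d = 1 \<or> d = -1)" and ij: "i \<noteq> j" "1 \<le> i" "i \<le> n" "1 \<le> j" "j \<le> n"
    unfolding LR_def by blast
  have "swp a b x = vadd (vscale c (eps (sw a b i))) (vscale d (eps (sw a b j)))"
    by (simp add: x swp_vadd swp_se)
  moreover have "ng a x = vadd (vscale (if i = a then - c else c) (eps i)) (vscale (if j = a then - d else d) (eps j))"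
    by (simp add: x ng_vadd ng_se)
  ultimately show "swp a b x \<in> LR n \<and> ng a x \<in> LR n"
    unfolding LR_def using cd ij sw_range[OF ab] sw_inj[OF ij(1), of a b]
    by (smt (verit, best) mem_Collect_eq)
qed

lemma clos_SR: "clos n (SR n t)"
  unfolding clos_def
proof (intro allI impI)
  fix a b x
  assume ab: "1 \<le> a" "a \<le> n" "1 \<le> b" "b \<le> n" and "x \<in> SR n t"
  then obtain c i where x: "x = vscale (t * c) (eps i)"
    and cd: "(c = 1 \<or> c = -1)" and ij: "1 \<le> i" "i \<le> n"
    unfolding SR_def by blast
  have "swp a b x = vscale (t * c) (eps (sw a b i))"
    by (simp add: x swp_se)
  moreover have "ng a x = vscale (t * (if i = a then - c else c)) (eps i)"
    by (simp add: x ng_se)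
  ultimately show "swp a b x \<in> SR n t \<and> ng a x \<in> SR n t"
    unfolding SR_def using cd ij sw_range[OF ab]
    by (smt (verit, best) mem_Collect_eq)
qed

lemma refl_clos:
  assumes "clos n X" "\<beta> \<in> posB n \<union> posC n" "x \<in> X"
  shows "refl n \<beta> x \<in> X"
proof -
  have "\<beta> \<in> long_pos n \<or> (\<exists>i. 1 \<le> i \<and> i \<le> n \<and> (\<beta> = eps i \<or> \<beta> = vscale 2 (eps i)))"
    using assms(2) unfolding posB_def posC_def by blast
  then show ?thesis
  proof (cases "\<beta> \<in> long_pos n")
    case True
    then obtain i j where ij: "1 \<le> i" "i < j" "j \<le> n" and "\<beta> = vadd (eps i) (eps j) \<or> \<beta> = vsub (eps i) (eps j)"
      unfolding long_pos_def by blast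
    then show ?thesis
    proof (elim disjE)
      assume "\<beta> = vadd (eps i) (eps j)"
      then show ?thesis using refl_plus[of i j n] ij assms(1,3) unfolding clos_def by simp
    next
      assume "\<beta> = vsub (eps i) (eps j)"
      then show ?thesis using refl_minus[of i j n] ij assms(1,3) unfolding clos_def by simp
    qed
  next
    case False
    then obtain i where "1 \<le> i" "i \<le> n" "\<beta> = eps i \<or> \<beta> = vscale 2 (eps i)"
      using \<open>\<beta> \<in> long_pos n \<or> _\<close> by blast
    then show ?thesis using refl_short[of i n] refl_short2[of i n] assms(1,3) unfolding clos_def by auto
  qed
qed

lemma sigma_clos:
  assumes "ON n D" "finite A" "A \<subseteq> D" "D \<subseteq> posB n \<union> posC n" "clos n X" "x \<in> X"
  shows "sigma n A x \<in> X"
  using assms(2,3)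
proof (induction A rule: finite_induct)
  case empty
  then show ?case using assms(6) by (simp add: sigma_empty)
next
  case (insert y F)
  then show ?case
    using sigma_insert[OF assms(1) insert(1) insert(4) insert(2)] refl_clos[OF assms(5)] assms(4) by auto
qed
lemma eps_app: "eps i k = (if k = i then 1 else 0)" by (simp add: eps_def)
lemma vadd_app: "vadd u w k = u k + w k" by (simp add: vadd_def)
lemma vsub_app: "vsub u w k = u k - w k" by (simp add: vsub_def)
lemma vscale_app: "vscale c u k = c * u k" by (simp add: vscale_def)
lemma vneg_app: "vneg u k = - u k" by (simp add: vneg_def)
lemmas app_simps = eps_app vadd_app vsub_app vscale_app vneg_app

lemma posB_cases:
  assumes "x \<in> posB n"
  obtains (plus) i j where "1 \<le> i" "i < j" "j \<le> n" "x = vadd (eps i) (eps j)"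
  | (minus) i j where "1 \<le> i" "i < j" "j \<le> n" "x = vsub (eps i) (eps j)"
  | (short) i where "1 \<le> i" "i \<le> n" "x = eps i"
  using assms unfolding posB_def long_pos_def by blast

lemma posC_cases:
  assumes "x \<in> posC n"
  obtains (plus) i j where "1 \<le> i" "i < j" "j \<le> n" "x = vadd (eps i) (eps j)"
  | (minus) i j where "1 \<le> i" "i < j" "j \<le> n" "x = vsub (eps i) (eps j)"
  | (short) i where "1 \<le> i" "i \<le> n" "x = vscale 2 (eps i)"
  using assms unfolding posC_def long_pos_def by blast

lemma long_cases:
  assumes "x \<in> long_pos n"
  obtains (plus) i j where "1 \<le> i" "i < j" "j \<le> n" "x = vadd (eps i) (eps j)"
  | (minus) i j where "1 \<le> i" "i < j" "j \<le> n" "x = vsub (eps i) (eps j)"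
  using assms unfolding long_pos_def by blast

lemma long_sub: "long_pos n \<subseteq> posB n \<inter> posC n"
  by (auto simp: posB_def posC_def)

lemma finite_long: "finite (long_pos n)"
proof -
  have "long_pos n \<subseteq> (\<lambda>(i,j). vadd (eps i) (eps j)) ` ({1..n} \<times> {1..n}) \<union> (\<lambda>(i,j). vsub (eps i) (eps j)) ` ({1..n} \<times> {1..n})"
    unfolding long_pos_def by force
  then show ?thesis by (rule finite_subset) auto
qed

lemma finite_posB: "finite (posB n)"
proof -
  have "{eps i | i. 1 \<le> i \<and> i \<le> n} = eps ` {1..n}" by auto
  then show ?thesis unfolding posB_def using finite_long by simp
qed

lemma finite_posC: "finite (posC n)"
proof -
  have "{vscale 2 (eps i) | i. 1 \<le> i \<and> i \<le> n} = (\<lambda>i. vscale 2 (eps i)) ` {1..n}" by auto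
  then show ?thesis unfolding posC_def using finite_long by simp
qed

lemma pos_supp: "x \<in> posB n \<union> posC n \<Longrightarrow> k = 0 \<or> n < k \<Longrightarrow> x k = 0"
  unfolding posB_def posC_def long_pos_def by (auto simp: app_simps)

lemma pos_coord1: "x \<in> posB n \<union> posC n \<Longrightarrow> x 1 \<ge> 0"
  unfolding posB_def posC_def long_pos_def by (auto simp: app_simps)

lemma pos_nz: "x \<in> posB n \<union> posC n \<Longrightarrow> \<exists>k. x k \<noteq> 0"
  unfolding posB_def posC_def long_pos_def
  by (auto simp: app_simps; metis less_irrefl)

definition wt :: "nat \<Rightarrow> vec \<Rightarrow> real" where
  "wt n v = (\<Sum>k=1..n. real (n + 1 - k) * v k)"

lemma wt_eps: "1 \<le> i \<Longrightarrow> i \<le> n \<Longrightarrow> wt n (eps i) = real (n + 1 - i)"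
  by (simp add: wt_def eps_def if_distrib cong: if_cong)
lemma wt_vadd: "wt n (vadd u w) = wt n u + wt n w"
  by (simp add: wt_def vadd_def distrib_left sum.distrib)
lemma wt_vsub: "wt n (vsub u w) = wt n u - wt n w"
  by (simp add: wt_def vsub_def right_diff_distrib sum_subtractf)
lemma wt_vscale: "wt n (vscale c u) = c * wt n u"
  by (simp add: wt_def vscale_def sum_distrib_left mult.left_commute)
lemma wt_vneg: "wt n (vneg u) = - wt n u"
  by (simp add: wt_def vneg_def sum_negf)

lemma wt_pos: "x \<in> posB n \<union> posC n \<Longrightarrow> wt n x > 0"
  unfolding posB_def posC_def long_pos_def
  by (auto simp: wt_vadd wt_vsub wt_vscale wt_eps of_nat_diff)

lemma pos_not_neg: "x \<in> posB n \<union> posC n \<Longrightarrow> vneg x \<notin> posB n \<union> posC n"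
  using wt_pos[of x n] wt_pos[of "vneg x" n] wt_vneg[of n x] by auto

lemma vneg_vneg: "vneg (vneg x) = x" by (simp add: vneg_def)
lemma LR_split:
  assumes "x \<in> LR n" shows "x \<in> long_pos n \<or> vneg x \<in> long_pos n"
proof -
  obtain c d i j where x: "x = vadd (vscale c (eps i)) (vscale d (eps j))"
    and cd: "(c = 1 \<or> c = -1)" "(d = 1 \<or> d = -1)" and ij: "i \<noteq> j" "1 \<le> i" "i \<le> n" "1 \<le> j" "j \<le> n"
    using assms unfolding LR_def by blast
  have sym: "x = vadd (vscale d (eps j)) (vscale c (eps i))" using x by (auto simp: vadd_def)
  have main: "\<And>c d i j. (c = 1 \<or> c = -1) \<Longrightarrow> (d = 1 \<or> d = -1) \<Longrightarrow> 1 \<le> i \<Longrightarrow> i < j \<Longrightarrow> j \<le> n \<Longrightarrow>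
     vadd (vscale c (eps i)) (vscale d (eps j)) \<in> long_pos n \<or> vneg (vadd (vscale c (eps i)) (vscale d (eps j))) \<in> long_pos n"
  proof -
    fix c d :: real and i j :: nat
    assume cd: "(c = 1 \<or> c = -1)" "(d = 1 \<or> d = -1)" and ij: "1 \<le> i" "i < j" "j \<le> n"
    have A: "vadd (eps i) (eps j) \<in> long_pos n" "vsub (eps i) (eps j) \<in> long_pos n"
      using ij unfolding long_pos_def by blast+
    show "vadd (vscale c (eps i)) (vscale d (eps j)) \<in> long_pos n \<or> vneg (vadd (vscale c (eps i)) (vscale d (eps j))) \<in> long_pos n"
      using cd
    proof (elim disjE)
      assume "c = 1" "d = 1" then show ?thesis using A(1) by (simp add: vadd_def vscale_def fun_eq_iff)
    next
      assume "c = 1" "d = -1"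
      then have "vadd (vscale c (eps i)) (vscale d (eps j)) = vsub (eps i) (eps j)" by (simp add: vadd_def vsub_def vscale_def fun_eq_iff)
      then show ?thesis using A(2) by simp
    next
      assume "c = -1" "d = 1"
      then have "vneg (vadd (vscale c (eps i)) (vscale d (eps j))) = vsub (eps i) (eps j)" by (simp add: vadd_def vsub_def vneg_def vscale_def fun_eq_iff)
      then show ?thesis using A(2) by simp
    next
      assume "c = -1" "d = -1"
      then have "vneg (vadd (vscale c (eps i)) (vscale d (eps j))) = vadd (eps i) (eps j)" by (simp add: vadd_def vneg_def vscale_def fun_eq_iff)
      then show ?thesis using A(1) by simp
    qed
  qed
  show ?thesis
  proof (cases "i < j")
    case True then show ?thesis using main[OF cd ij(2) True ij(5)] x by simp
  next
    case False then have "j < i" using ij(1) by simp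
    then show ?thesis using main[OF cd(2) cd(1) ij(4) _ ij(3)] sym by simp
  qed
qed

lemma long_in_LR: assumes "x \<in> long_pos n" shows "x \<in> LR n"
  using assms
proof (cases rule: long_cases)
  case (plus i j)
  then have "x = vadd (vscale 1 (eps i)) (vscale 1 (eps j))" by (simp add: vscale_def fun_eq_iff)
  then show ?thesis unfolding LR_def using plus by fastforce
next
  case (minus i j)
  then have "x = vadd (vscale 1 (eps i)) (vscale (-1) (eps j))" by (simp add: vadd_def vsub_def vscale_def fun_eq_iff)
  then show ?thesis unfolding LR_def using minus by fastforce
qed

lemma SR_split:
  assumes "x \<in> SR n t" shows "\<exists>i. 1 \<le> i \<and> i \<le> n \<and> (x = vscale t (eps i) \<or> vneg x = vscale t (eps i))"
  using assms unfolding SR_def by (auto simp: vscale_def vneg_def fun_eq_iff)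

lemma eps_SR: "1 \<le> i \<Longrightarrow> i \<le> n \<Longrightarrow> eps i \<in> SR n 1"
  unfolding SR_def by (rule CollectI, rule exI[of _ 1], rule exI[of _ i]) (simp add: vscale_def)
lemma eps2_SR: "1 \<le> i \<Longrightarrow> i \<le> n \<Longrightarrow> vscale 2 (eps i) \<in> SR n 2"
  unfolding SR_def by (rule CollectI, rule exI[of _ 1], rule exI[of _ i]) simp

lemma vscale1: "vscale 1 v = v" by (simp add: vscale_def)

lemma phiB: "x \<in> LR n \<union> SR n 1 \<Longrightarrow> x \<in> posB n \<or> vneg x \<in> posB n"
  using LR_split[of x n] SR_split[of x n 1] unfolding posB_def by (auto simp: vscale1)
lemma phiC: "x \<in> LR n \<union> SR n 2 \<Longrightarrow> x \<in> posC n \<or> vneg x \<in> posC n"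
  using LR_split[of x n] SR_split[of x n 2] unfolding posC_def by auto

lemma posB_phi: "x \<in> posB n \<Longrightarrow> x \<in> LR n \<or> x \<in> SR n 1"
  unfolding posB_def using long_in_LR eps_SR by blast
lemma posC_phi: "x \<in> posC n \<Longrightarrow> x \<in> LR n \<or> x \<in> SR n 2"
  unfolding posC_def using long_in_LR eps2_SR by blast
lemma col1_iff: assumes "x \<in> posB n \<union> posC n" shows "col x = 1 \<longleftrightarrow> x 1 \<noteq> 0"
proof
  assume "col x = 1"
  moreover have "x (col x) \<noteq> 0" unfolding col_def using pos_nz[OF assms] by (rule LeastI_ex)
  ultimately show "x 1 \<noteq> 0" by simp
next
  assume h: "x 1 \<noteq> 0"
  have "x 0 = 0" using pos_supp[OF assms] by simp
  then show "col x = 1" unfolding col_def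
    by (rule_tac Least_equality) (use h in auto, metis One_nat_def less_one not_less)
qed

lemma colset1: "P \<subseteq> posB n \<union> posC n \<Longrightarrow> colset P 1 = {x \<in> P. x 1 \<noteq> 0}"
  unfolding colset_def using col1_iff by blast

lemma col_eq: "x i \<noteq> 0 \<Longrightarrow> (\<forall>k<i. x k = 0) \<Longrightarrow> col x = i"
  unfolding col_def by (rule Least_equality) (auto simp: not_less[symmetric])

lemma row_eps: "row (eps i) = 0"
proof -
  have c: "col (eps i) = i" by (rule col_eq) (auto simp: eps_def)
  show ?thesis unfolding row_def c by (auto simp: eps_def)
qed

lemma row_plus: assumes "i < j" shows "row (vadd (eps i) (eps j)) = - real j"
proof -
  let ?x = "vadd (eps i) (eps j)"
  have c: "col ?x = i" by (rule col_eq) (use assms in \<open>auto simp: app_simps\<close>)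
  have t: "(THE j'. i < j' \<and> ?x j' \<noteq> 0) = j"
    by (rule the_equality) (use assms in \<open>auto simp: app_simps split: if_splits\<close>)
  have e: "\<exists>j'. col ?x < j' \<and> ?x j' \<noteq> 0" unfolding c using assms by (auto simp: app_simps)
  show ?thesis unfolding row_def using e unfolding c t Let_def using assms by (simp add: app_simps)
qed

lemma row_minus: assumes "i < j" shows "row (vsub (eps i) (eps j)) = real j"
proof -
  let ?x = "vsub (eps i) (eps j)"
  have c: "col ?x = i" by (rule col_eq) (use assms in \<open>auto simp: app_simps\<close>)
  have t: "(THE j'. i < j' \<and> ?x j' \<noteq> 0) = j"
    by (rule the_equality) (use assms in \<open>auto simp: app_simps split: if_splits\<close>)
  have e: "\<exists>j'. col ?x < j' \<and> ?x j' \<noteq> 0" unfolding c using assms by (auto simp: app_simps)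
  show ?thesis unfolding row_def using e unfolding c t Let_def using assms by (simp add: app_simps)
qed
lemma card_col1_gen:
  assumes s2: "\<And>j. 2 \<le> j \<Longrightarrow> s j = 0" and n: "1 \<le> n"
  shows "card (insert s ((\<lambda>j. vadd (eps 1) (eps j)) ` {2..n} \<union> (\<lambda>j. vsub (eps 1) (eps j)) ` {2..n})) = 2 * n - 1"
proof -
  let ?A = "(\<lambda>j. vadd (eps 1) (eps j)) ` {2..n}" and ?B = "(\<lambda>j. vsub (eps 1) (eps j)) ` {2..n}"
  have i1: "inj_on (\<lambda>j. vadd (eps 1) (eps j)) {2..n}"
  proof (rule inj_onI)
    fix a b assume "a \<in> {2..n}" "b \<in> {2..n}" "vadd (eps 1) (eps a) = vadd (eps 1) (eps b)"
    then have "vadd (eps 1) (eps a) a = vadd (eps 1) (eps b) a" by simp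
    then show "a = b" using \<open>a \<in> {2..n}\<close> by (auto simp: app_simps split: if_splits)
  qed
  have i2: "inj_on (\<lambda>j. vsub (eps 1) (eps j)) {2..n}"
  proof (rule inj_onI)
    fix a b assume "a \<in> {2..n}" "b \<in> {2..n}" "vsub (eps 1) (eps a) = vsub (eps 1) (eps b)"
    then have "vsub (eps 1) (eps a) a = vsub (eps 1) (eps b) a" by simp
    then show "a = b" using \<open>a \<in> {2..n}\<close> by (auto simp: app_simps split: if_splits)
  qed
  have d: "?A \<inter> ?B = {}"
  proof (rule ccontr)
    assume "?A \<inter> ?B \<noteq> {}"
    then obtain a b where ab: "a \<in> {2..n}" "b \<in> {2..n}" "vadd (eps 1) (eps a) = vsub (eps 1) (eps b)" by blast
    then have "vadd (eps 1) (eps a) a = vsub (eps 1) (eps b) a" by simp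
    then show False using ab(1) by (auto simp: app_simps split: if_splits)
  qed
  have ns: "s \<notin> ?A \<union> ?B"
  proof
    assume "s \<in> ?A \<union> ?B"
    then obtain a where a: "a \<in> {2..n}" "s = vadd (eps 1) (eps a) \<or> s = vsub (eps 1) (eps a)" by blast
    then have "s a \<noteq> 0" by (auto simp: app_simps)
    then show False using s2 a(1) by auto
  qed
  have "card (insert s (?A \<union> ?B)) = Suc (card ?A + card ?B)"
    using ns d by (simp add: card_Un_disjoint)
  also have "\<dots> = Suc (2 * (n - 1))" using card_image[OF i1] card_image[OF i2] by simp
  finally show ?thesis using n by simp
qed

lemma plus1_long: "2 \<le> j \<Longrightarrow> j \<le> n \<Longrightarrow> vadd (eps 1) (eps j) \<in> long_pos n"
  unfolding long_pos_def by (rule UnI1, rule CollectI, rule exI[of _ 1], rule exI[of _ j]) auto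
lemma minus1_long: "2 \<le> j \<Longrightarrow> j \<le> n \<Longrightarrow> vsub (eps 1) (eps j) \<in> long_pos n"
  unfolding long_pos_def by (rule UnI2, rule CollectI, rule exI[of _ 1], rule exI[of _ j]) auto

lemma col1_setB: "1 \<le> n \<Longrightarrow> {x \<in> posB n. x 1 \<noteq> 0} =
   insert (eps 1) ((\<lambda>j. vadd (eps 1) (eps j)) ` {2..n} \<union> (\<lambda>j. vsub (eps 1) (eps j)) ` {2..n})"
  apply (rule set_eqI)
  apply (rule iffI)
   apply (elim CollectE conjE)
   apply (erule posB_cases)
     apply (auto simp: app_simps split: if_splits)[3]
  using plus1_long minus1_long long_sub apply (auto simp: app_simps posB_def)
  done

lemma col1_setC: "1 \<le> n \<Longrightarrow> {x \<in> posC n. x 1 \<noteq> 0} =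
   insert (vscale 2 (eps 1)) ((\<lambda>j. vadd (eps 1) (eps j)) ` {2..n} \<union> (\<lambda>j. vsub (eps 1) (eps j)) ` {2..n})"
  apply (rule set_eqI)
  apply (rule iffI)
   apply (elim CollectE conjE)
   apply (erule posC_cases)
     apply (auto simp: app_simps split: if_splits)[3]
  using plus1_long minus1_long long_sub apply (auto simp: app_simps posC_def)
  done

lemma card_colB: "card (colset (posB n) 1) = 2 * n - 1"
proof (cases "n = 0")
  case True
  then have "posB n = {}" unfolding posB_def long_pos_def by auto
  then show ?thesis using True by (simp add: colset_def)
next
  case False
  then show ?thesis using colset1[of "posB n" n] col1_setB[of n] card_col1_gen[of "eps 1" n]
    by (simp add: app_simps)
qed

lemma card_colC: "card (colset (posC n) 1) = 2 * n - 1"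
proof (cases "n = 0")
  case True
  then have "posC n = {}" unfolding posC_def long_pos_def by auto
  then show ?thesis using True by (simp add: colset_def)
next
  case False
  then show ?thesis using colset1[of "posC n" n] col1_setC[of n] card_col1_gen[of "vscale 2 (eps 1)" n]
    by (simp add: app_simps)
qed
lemma ip_self: "x \<in> posB n \<union> posC n \<Longrightarrow> ip n x x \<noteq> 0"
  unfolding posB_def posC_def long_pos_def
  by (auto simp: ip_v_vadd ip_v_vsub ip_eps ip_v_vscale app_simps)

lemma ON_pos: "D \<subseteq> posB n \<union> posC n \<Longrightarrow> orthogonal_set n D \<Longrightarrow> ON n D"
  unfolding ON_def using ip_self by blast

lemma ng_fix: "w 1 = 0 \<Longrightarrow> ng 1 w = w" by (auto simp: ng_def fun_eq_iff)
lemma ng_1: "ng 1 w 1 = - w 1" by (simp add: ng_def)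

lemma neg_iff: "y \<in> Q \<or> vneg y \<in> Q \<Longrightarrow> Q \<subseteq> P \<Longrightarrow> P \<subseteq> posB n \<union> posC n \<Longrightarrow> (vneg y \<in> P \<longleftrightarrow> y \<notin> Q)"
  using pos_not_neg[of y n] pos_not_neg[of "vneg y" n] vneg_vneg[of y] by blast

lemma sigma_coord:
  assumes "ON n D" "finite A" "A \<subseteq> D" "\<forall>\<beta>\<in>A. \<beta> m = 0"
  shows "sigma n A v m = v m"
  using sigma_cf[OF assms(1-3), of v] assms(4) by (auto intro!: sum.neutral)

theorem partC:
  assumes D: "D \<subseteq> posC n" "orthogonal_set n D" "D \<inter> colset (posC n) 1 = {vscale 2 (eps 1)}"
  shows "len (posC n) (sigma n D) = len' (posC n - colset (posC n) 1) (sigma n (D \<inter> (posC n - colset (posC n) 1)))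
          + card (colset (posC n) 1)"
proof -
  let ?e = "vscale 2 (eps 1)"
  let ?C1 = "colset (posC n) 1" let ?Pt = "posC n - colset (posC n) 1"
  let ?Dt = "D \<inter> ?Pt"
  let ?t = "sigma n ?Dt"
  have C1: "?C1 = {x \<in> posC n. x 1 \<noteq> 0}" using colset1[of "posC n" n] by blast
  have Pt: "?Pt = {x \<in> posC n. x 1 = 0}" using C1 by blast
  have eD: "?e \<in> D" using D(3) unfolding colset_def by blast
  have "?e \<in> posC n" using eD D(1) by blast
  then have n1: "1 \<le> n" using pos_supp[of ?e n 1] by (cases "n = 0") (auto simp: app_simps)
  have ON: "ON n D" using ON_pos D(1,2) by blast
  have fin: "finite D" using finite_subset[OF D(1) finite_posC] .
  have Dt: "?Dt = D - {?e}" using D(1,3) by blast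
  have sig: "sigma n D = ng 1 \<circ> ?t"
  proof -
    have "insert ?e (D - {?e}) = D" using eD by blast
    then have "sigma n D = refl n ?e \<circ> sigma n (D - {?e})"
      using sigma_insert[OF ON, of "D - {?e}" ?e] fin eD by simp
    then show ?thesis unfolding Dt using refl_short2[OF _ n1] by simp
  qed
  have DtD: "?Dt \<subseteq> D" by blast
  have finDt: "finite ?Dt" using fin by blast
  have DposBC: "D \<subseteq> posB n \<union> posC n" using D(1) by blast
  have t1: "\<And>v. ?t v 1 = v 1"
    by (rule sigma_coord[OF ON finDt DtD]) (use Pt in auto)
  have tphi: "\<And>x. x \<in> posC n \<Longrightarrow> ?t x \<in> LR n \<union> SR n 2"
    using posC_phi sigma_clos[OF ON finDt DtD DposBC clos_LR] sigma_clos[OF ON finDt DtD DposBC clos_SR] by blast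
  have col1case: "\<And>\<alpha>. \<alpha> \<in> posC n \<Longrightarrow> \<alpha> 1 \<noteq> 0 \<Longrightarrow> vneg (sigma n D \<alpha>) \<in> posC n"
  proof -
    fix \<alpha> assume a: "\<alpha> \<in> posC n" "\<alpha> 1 \<noteq> 0"
    have "ng 1 (?t \<alpha>) \<in> LR n \<union> SR n 2"
      using tphi[OF a(1)] clos_LR[of n] clos_SR[of n 2] n1 unfolding clos_def by blast
    then have "sigma n D \<alpha> \<in> posC n \<or> vneg (sigma n D \<alpha>) \<in> posC n" using phiC sig by simp
    moreover have "sigma n D \<alpha> 1 < 0" using sig ng_1 t1 pos_coord1[of \<alpha> n] a by force
    ultimately show "vneg (sigma n D \<alpha>) \<in> posC n" using pos_coord1[of "sigma n D \<alpha>" n] by force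
  qed
  have ptcase: "\<And>\<alpha>. \<alpha> \<in> ?Pt \<Longrightarrow> (vneg (sigma n D \<alpha>) \<in> posC n \<longleftrightarrow> ?t \<alpha> \<notin> ?Pt)"
  proof -
    fix \<alpha> assume a: "\<alpha> \<in> ?Pt"
    have z: "?t \<alpha> 1 = 0" using t1 a Pt by auto
    have s: "sigma n D \<alpha> = ?t \<alpha>" using sig ng_fix[of "?t \<alpha>", OF z] by simp
    have "?t \<alpha> \<in> posC n \<or> vneg (?t \<alpha>) \<in> posC n" using phiC tphi a by blast
    then have "?t \<alpha> \<in> ?Pt \<or> vneg (?t \<alpha>) \<in> ?Pt" using z Pt by (auto simp: vneg_def)
    from neg_iff[OF this, of "posC n" n] show "vneg (sigma n D \<alpha>) \<in> posC n \<longleftrightarrow> ?t \<alpha> \<notin> ?Pt"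
      unfolding s by blast
  qed
  have split: "{\<alpha> \<in> posC n. vneg (sigma n D \<alpha>) \<in> posC n} = ?C1 \<union> {\<alpha> \<in> ?Pt. ?t \<alpha> \<notin> ?Pt}"
    using col1case ptcase C1 Pt by blast
  have "len (posC n) (sigma n D) = card (?C1 \<union> {\<alpha> \<in> ?Pt. ?t \<alpha> \<notin> ?Pt})"
    unfolding len_def split ..
  also have "\<dots> = card ?C1 + card {\<alpha> \<in> ?Pt. ?t \<alpha> \<notin> ?Pt}"
    by (rule card_Un_disjoint) (use finite_posC[of n] in \<open>auto simp: colset_def\<close>)
  finally show ?thesis unfolding len'_def by simp
qed
definition FF :: "nat \<Rightarrow> vec \<Rightarrow> real" where
  "FF n v = (\<Sum>m=1..n. v m)"

lemma FF_lin_sum: "FF n (\<lambda>k. v k - (\<Sum>\<beta>\<in>A. g \<beta> * \<beta> k)) = FF n v - (\<Sum>\<beta>\<in>A. g \<beta> * FF n \<beta>)"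
  unfolding FF_def
  by (simp add: sum_subtractf sum_distrib_left sum.swap[of _ A])

lemma FF_se: "1 \<le> m \<Longrightarrow> m \<le> n \<Longrightarrow> FF n (vscale c (eps m)) = c"
  by (simp add: FF_def vscale_def eps_def if_distrib cong: if_cong)

lemma FF_tail: "1 \<le> n \<Longrightarrow> \<beta> 1 = 0 \<Longrightarrow> (\<Sum>k=2..n. \<beta> k) = FF n \<beta>"
  unfolding FF_def by (simp add: sum.atLeast_Suc_atMost numeral_2_eq_2)

lemma sum_pm: "finite K \<Longrightarrow> (\<Sum>k\<in>K. (if P k then -1 else 1 :: real)) = real (card K) - 2 * real (card {k\<in>K. P k})"
proof (induction K rule: finite_induct)
  case empty then show ?case by simp
next
  case (insert x F)
  have "{k \<in> insert x F. P k} = (if P x then insert x {k\<in>F. P k} else {k\<in>F. P k})" by auto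
  moreover have "x \<notin> {k\<in>F. P k}" using insert by auto
  ultimately show ?case using insert by (simp add: card_insert_if)
qed

lemma row_long:
  assumes "x \<in> long_pos n" shows "row x \<noteq> 0"
  using assms
proof (cases rule: long_cases)
  case (plus i j) then show ?thesis using row_plus[of i j] by simp
next
  case (minus i j) then show ?thesis using row_minus[of i j] by simp
qed

lemma eps_not_long: "eps k \<notin> long_pos n"
  using row_long row_eps by metis

lemma rowset0: "rowset (posB n) 0 = {x \<in> posB n. x \<notin> long_pos n}"
  unfolding rowset_def
  apply (rule set_eqI)
  apply (rule iffI)
  using row_long apply blast
  apply (auto simp: posB_def row_eps)
  done
lemma eps_inj: "inj eps"
proof (rule injI)
  fix a b :: nat assume "eps a = eps b"
  then have "eps a a = eps b a" by simp
  then show "a = b" by (simp add: eps_def split: if_splits)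
qed

lemma ip_long: "x \<in> long_pos n \<Longrightarrow> ip n x x = 2"
  unfolding long_pos_def by (auto simp: ip_v_vadd ip_v_vsub app_simps)
lemma FF_eps: "1 \<le> k \<Longrightarrow> k \<le> n \<Longrightarrow> FF n (eps k) = 1"
  using FF_se[of k n 1] by (simp add: vscale1)
lemma FF_vadd: "FF n (vadd u w) = FF n u + FF n w" by (simp add: FF_def vadd_def sum.distrib)
lemma FF_vsub: "FF n (vsub u w) = FF n u - FF n w" by (simp add: FF_def vsub_def sum_subtractf)

theorem partB:
  assumes D: "D \<subseteq> posB n" "orthogonal_set n D" "eps 1 \<in> D" "\<forall>k. 2 \<le> k \<longrightarrow> eps k \<notin> D"
  defines "Pt \<equiv> posB n - (colset (posB n) 1 \<union> rowset (posB n) 0)"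
  shows "len (posB n) (sigma n D) = len' Pt (sigma n (D \<inter> Pt)) + card (colset (posB n) 1)
          + 2 * card {\<beta> \<in> D \<inter> Pt. row \<beta> < 0}"
proof -
  let ?e = "eps 1"
  let ?C1 = "colset (posB n) 1"
  let ?Dt = "D \<inter> Pt"
  let ?t = "sigma n ?Dt"
  have C1: "?C1 = {x \<in> posB n. x 1 \<noteq> 0}" using colset1[of "posB n" n] by blast
  have Pt: "Pt = {x \<in> long_pos n. x 1 = 0}"
    unfolding Pt_def C1 rowset0 using long_sub by blast
  have "?e \<in> posB n" using D by blast
  then have n1: "1 \<le> n" using pos_supp[of ?e n 1] by (cases "n = 0") (auto simp: app_simps)
  have ON: "ON n D" using ON_pos D(1,2) by blast
  have fin: "finite D" using finite_subset[OF D(1) finite_posB] .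
  have Dt: "?Dt = D - {?e}"
  proof
    show "?Dt \<subseteq> D - {?e}" using Pt by (auto simp: app_simps)
    show "D - {?e} \<subseteq> ?Dt"
    proof
      fix \<beta> assume b: "\<beta> \<in> D - {?e}"
      then have "ip n \<beta> ?e = 0" using D(2,3) unfolding orthogonal_set_def by blast
      then have b1: "\<beta> 1 = 0" using ip_eps[OF _ n1, of \<beta>] by simp
      have "\<beta> \<in> long_pos n"
      proof (rule ccontr)
        assume "\<beta> \<notin> long_pos n"
        then obtain i where "1 \<le> i" "\<beta> = eps i" using b D(1) unfolding posB_def by blast
        then show False using b D(4) b1 by (cases "i = 1") (auto simp: app_simps)
      qed
      then show "\<beta> \<in> ?Dt" using b b1 Pt by blast
    qed
  qed
  have sig: "sigma n D = ng 1 \<circ> ?t"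
  proof -
    have "insert ?e (D - {?e}) = D" using D(3) by blast
    then have "sigma n D = refl n ?e \<circ> sigma n (D - {?e})"
      using sigma_insert[OF ON, of "D - {?e}" ?e] fin D(3) by simp
    then show ?thesis unfolding Dt using refl_short[OF _ n1] by simp
  qed
  have DtD: "?Dt \<subseteq> D" by blast
  have finDt: "finite ?Dt" using fin by blast
  have DposBC: "D \<subseteq> posB n \<union> posC n" using D(1) by blast
  have t1: "\<And>v. ?t v 1 = v 1"
    by (rule sigma_coord[OF ON finDt DtD]) (use Pt in auto)
  have tLR: "\<And>x. x \<in> LR n \<Longrightarrow> ?t x \<in> LR n"
    using sigma_clos[OF ON finDt DtD DposBC clos_LR] by blast
  have tSR: "\<And>x. x \<in> SR n 1 \<Longrightarrow> ?t x \<in> SR n 1"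
    using sigma_clos[OF ON finDt DtD DposBC clos_SR] by blast
  have tphi: "\<And>x. x \<in> posB n \<Longrightarrow> ?t x \<in> LR n \<union> SR n 1"
    using posB_phi tLR tSR by blast
  have col1case: "\<And>\<alpha>. \<alpha> \<in> posB n \<Longrightarrow> \<alpha> 1 \<noteq> 0 \<Longrightarrow> vneg (sigma n D \<alpha>) \<in> posB n"
  proof -
    fix \<alpha> assume a: "\<alpha> \<in> posB n" "\<alpha> 1 \<noteq> 0"
    have "ng 1 (?t \<alpha>) \<in> LR n \<union> SR n 1"
      using tphi[OF a(1)] clos_LR[of n] clos_SR[of n 1] n1 unfolding clos_def by blast
    then have "sigma n D \<alpha> \<in> posB n \<or> vneg (sigma n D \<alpha>) \<in> posB n" using phiB sig by simp
    moreover have "sigma n D \<alpha> 1 < 0" using sig ng_1 t1 pos_coord1[of \<alpha> n] a by force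
    ultimately show "vneg (sigma n D \<alpha>) \<in> posB n" using pos_coord1[of "sigma n D \<alpha>" n] by force
  qed
  have ptcase: "\<And>\<alpha>. \<alpha> \<in> Pt \<Longrightarrow> (vneg (sigma n D \<alpha>) \<in> posB n \<longleftrightarrow> ?t \<alpha> \<notin> Pt)"
  proof -
    fix \<alpha> assume a: "\<alpha> \<in> Pt"
    have z: "?t \<alpha> 1 = 0" using t1 a Pt by auto
    have s: "sigma n D \<alpha> = ?t \<alpha>" using sig ng_fix[of "?t \<alpha>", OF z] by simp
    have "?t \<alpha> \<in> LR n" using tLR long_in_LR a Pt by blast
    then have "?t \<alpha> \<in> long_pos n \<or> vneg (?t \<alpha>) \<in> long_pos n" by (rule LR_split)
    then have "?t \<alpha> \<in> Pt \<or> vneg (?t \<alpha>) \<in> Pt" using z Pt by (auto simp: vneg_def)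
    from neg_iff[OF this, of "posB n" n] show "vneg (sigma n D \<alpha>) \<in> posB n \<longleftrightarrow> ?t \<alpha> \<notin> Pt"
      unfolding s using Pt long_sub by blast
  qed
  define NK where "NK = {k \<in> {2..n}. vneg (?t (eps k)) \<in> posB n}"
  have shset: "{\<alpha> \<in> posB n. \<alpha> 1 = 0 \<and> \<alpha> \<notin> long_pos n \<and> vneg (sigma n D \<alpha>) \<in> posB n} = eps ` NK"
  proof -
    have se: "sigma n D (eps k) = ?t (eps k)" if "2 \<le> k" for k :: nat
      using sig ng_fix[of "?t (eps k)"] t1[of "eps k"] that by (simp add: app_simps)
    show ?thesis
    proof (rule set_eqI, rule iffI)
      fix x assume x: "x \<in> {\<alpha> \<in> posB n. \<alpha> 1 = 0 \<and> \<alpha> \<notin> long_pos n \<and> vneg (sigma n D \<alpha>) \<in> posB n}"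
      then obtain i where i: "1 \<le> i" "i \<le> n" "x = eps i" unfolding posB_def by blast
      have "i \<noteq> 1" using x i by (auto simp: app_simps)
      then have "2 \<le> i" using i by simp
      then have "i \<in> NK" unfolding NK_def using x i se by auto
      then show "x \<in> eps ` NK" using i by blast
    next
      fix x assume "x \<in> eps ` NK"
      then obtain k where k: "k \<in> NK" "x = eps k" by blast
      then have k2: "2 \<le> k" "k \<le> n" unfolding NK_def by auto
      have "eps k \<in> posB n" unfolding posB_def using k2 by auto
      then show "x \<in> {\<alpha> \<in> posB n. \<alpha> 1 = 0 \<and> \<alpha> \<notin> long_pos n \<and> vneg (sigma n D \<alpha>) \<in> posB n}"
        using k k2 se[OF k2(1)] eps_not_long unfolding NK_def by (auto simp: app_simps)
    qed
  qed
  have split: "{\<alpha> \<in> posB n. vneg (sigma n D \<alpha>) \<in> posB n} = ?C1 \<union> (eps ` NK \<union> {\<alpha> \<in> Pt. ?t \<alpha> \<notin> Pt})"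
    using col1case ptcase C1 Pt shset long_sub by blast
  have finPt: "finite Pt" using finite_long Pt by simp
  have "len (posB n) (sigma n D) = card (?C1 \<union> (eps ` NK \<union> {\<alpha> \<in> Pt. ?t \<alpha> \<notin> Pt}))"
    unfolding len_def split ..
  also have "\<dots> = card ?C1 + card (eps ` NK \<union> {\<alpha> \<in> Pt. ?t \<alpha> \<notin> Pt})"
  proof (rule card_Un_disjoint)
    show "finite ?C1" using finite_posB[of n] C1 by simp
    show "finite (eps ` NK \<union> {\<alpha> \<in> Pt. ?t \<alpha> \<notin> Pt})" using finPt NK_def by simp
    show "?C1 \<inter> (eps ` NK \<union> {\<alpha> \<in> Pt. ?t \<alpha> \<notin> Pt}) = {}"
      unfolding C1 using Pt NK_def by (auto simp: app_simps)
  qed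
  also have "card (eps ` NK \<union> {\<alpha> \<in> Pt. ?t \<alpha> \<notin> Pt}) = card (eps ` NK) + card {\<alpha> \<in> Pt. ?t \<alpha> \<notin> Pt}"
  proof (rule card_Un_disjoint)
    show "finite (eps ` NK)" unfolding NK_def by simp
    show "finite {\<alpha> \<in> Pt. ?t \<alpha> \<notin> Pt}" using finPt by simp
    show "eps ` NK \<inter> {\<alpha> \<in> Pt. ?t \<alpha> \<notin> Pt} = {}" using Pt eps_not_long by blast
  qed
  also have "card (eps ` NK) = card NK"
    by (rule card_image) (rule inj_on_subset[OF eps_inj], simp)
  finally have L: "len (posB n) (sigma n D) = card ?C1 + (card NK + len' Pt ?t)"
    unfolding len'_def by simp
  have NKc: "card NK = 2 * card {\<beta> \<in> ?Dt. row \<beta> < 0}"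
  proof -
    let ?R = "{\<beta> \<in> ?Dt. row \<beta> < 0}"
    have Dtl: "\<And>\<beta>. \<beta> \<in> ?Dt \<Longrightarrow> \<beta> \<in> long_pos n \<and> \<beta> 1 = 0" using Pt by blast
    have cfk: "?t (eps k) = (\<lambda>m. eps k m - (\<Sum>\<beta>\<in>?Dt. \<beta> k * \<beta> m))" if k: "k \<in> {2..n}" for k
    proof -
      have "?t (eps k) = (\<lambda>m. eps k m - (\<Sum>\<beta>\<in>?Dt. (2 * ip n (eps k) \<beta> / ip n \<beta> \<beta>) * \<beta> m))"
        by (rule sigma_cf[OF ON finDt DtD])
      also have "\<dots> = (\<lambda>m. eps k m - (\<Sum>\<beta>\<in>?Dt. \<beta> k * \<beta> m))"
        using k Dtl ip_long ip_eps_l[of k n] by (intro ext arg_cong2[where f="(-)"] refl sum.cong) auto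
      finally show ?thesis .
    qed
    have Fk: "FF n (?t (eps k)) = 1 - (\<Sum>\<beta>\<in>?Dt. \<beta> k * FF n \<beta>)" if k: "k \<in> {2..n}" for k
      unfolding cfk[OF k] FF_lin_sum using FF_eps k by simp
    have yk: "FF n (?t (eps k)) = (if k \<in> NK then -1 else 1)" if k: "k \<in> {2..n}" for k
    proof -
      have "eps k \<in> SR n 1" using eps_SR k by simp
      then have "?t (eps k) \<in> SR n 1" by (rule tSR)
      then obtain c i where ci: "c = 1 \<or> c = -1" "1 \<le> i" "i \<le> n" "?t (eps k) = vscale c (eps i)"
        unfolding SR_def by auto
      have epos: "eps i \<in> posB n" unfolding posB_def using ci by auto
      show ?thesis using ci(1)
      proof
        assume c: "c = 1"
        then have "?t (eps k) = eps i" using ci(4) vscale1 by simp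
        then have "k \<notin> NK" unfolding NK_def using pos_not_neg[of "eps i" n] epos by auto
        then show ?thesis using ci c FF_se by simp
      next
        assume c: "c = -1"
        then have "vneg (?t (eps k)) = eps i" using ci(4) by (simp add: vneg_def vscale_def)
        then have "k \<in> NK" unfolding NK_def using epos k by auto
        then show ?thesis using ci c FF_se by simp
      qed
    qed
    have NKsub: "NK \<subseteq> {2..n}" unfolding NK_def by auto
    have s1: "(\<Sum>k=2..n. FF n (?t (eps k))) = real (n - 1) - 2 * real (card NK)"
    proof -
      have "(\<Sum>k=2..n. FF n (?t (eps k))) = (\<Sum>k=2..n. (if k \<in> NK then -1 else 1 :: real))"
        using yk by (rule sum.cong[OF refl])
      also have "\<dots> = real (card {2..n}) - 2 * real (card {k \<in> {2..n}. k \<in> NK})"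
        by (rule sum_pm) simp
      also have "{k \<in> {2..n}. k \<in> NK} = NK" using NKsub by blast
      finally show ?thesis by simp
    qed
    have FFb: "FF n \<beta> * FF n \<beta> = (if row \<beta> < 0 then 4 else 0)" if b: "\<beta> \<in> ?Dt" for \<beta>
    proof -
      have "\<beta> \<in> long_pos n" using Dtl b by blast
      then show ?thesis
      proof (cases rule: long_cases)
        case (plus i j)
        then show ?thesis using row_plus[of i j] FF_vadd FF_eps by simp
      next
        case (minus i j)
        then show ?thesis using row_minus[of i j] FF_vsub FF_eps by simp
      qed
    qed
    have s2: "(\<Sum>k=2..n. FF n (?t (eps k))) = real (n - 1) - 4 * real (card ?R)"
    proof -
      have "(\<Sum>k=2..n. FF n (?t (eps k))) = (\<Sum>k=2..n. 1 - (\<Sum>\<beta>\<in>?Dt. \<beta> k * FF n \<beta>))"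
        using Fk by (rule sum.cong[OF refl])
      also have "\<dots> = real (n - 1) - (\<Sum>\<beta>\<in>?Dt. FF n \<beta> * (\<Sum>k=2..n. \<beta> k))"
        by (simp add: sum_subtractf sum.swap[of _ "{2..n}"] sum_distrib_left mult.commute)
      also have "(\<Sum>\<beta>\<in>?Dt. FF n \<beta> * (\<Sum>k=2..n. \<beta> k)) = (\<Sum>\<beta>\<in>?Dt. (if row \<beta> < 0 then 4 else 0))"
        using FF_tail[OF n1] Dtl FFb by (intro sum.cong) auto
      also have "\<dots> = (\<Sum>\<beta>\<in>?R. 4)" using sum.inter_filter[OF finDt, of "\<lambda>_. 4::real" "\<lambda>\<beta>. row \<beta> < 0"] by simp
      finally show ?thesis by simp
    qed
    from s1 s2 show ?thesis by linarith
  qed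
  show ?thesis using L NKc by simp
qed
theorem lemma3p4:
  fixes n :: nat
  shows
  "(\<forall>D. D \<subseteq> posB n \<and> orthogonal_set n D \<and> eps 1 \<in> D
        \<and> (\<forall>k. 2 \<le> k \<longrightarrow> eps k \<notin> D) \<longrightarrow>
      (let Pt = posB n - (colset (posB n) 1 \<union> rowset (posB n) 0);
           Dt = D \<inter> Pt in
       len (posB n) (sigma n D) =
         len' Pt (sigma n Dt) + card (colset (posB n) 1)
         + 2 * card {\<beta> \<in> Dt. row \<beta> < 0}
       \<and> card (colset (posB n) 1) = 2 * n - 1))
   \<and>
   (\<forall>D. D \<subseteq> posC n \<and> orthogonal_set n D
        \<and> D \<inter> colset (posC n) 1 = {vscale 2 (eps 1)} \<longrightarrow>
      (let Pt = posC n - colset (posC n) 1;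
           Dt = D \<inter> Pt in
       len (posC n) (sigma n D) = len' Pt (sigma n Dt) + card (colset (posC n) 1)
       \<and> card (colset (posC n) 1) = 2 * n - 1))"
  unfolding Let_def
  using partB[of _ n] partC[of _ n] card_colB[of n] card_colC[of n] by blast

end
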